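(* Let $n\ge3$ be a prime power and let $T_k$ ($1\le k\le n^2-1$) be the sets of functions $y^iz^j/x^k$ on the GK curve defined as follows: for $1\le k\le n-1$, the index pairs are $0\le i\le k,\ k-i+1\le j\le n^2-n$ together with $k+1\le i\le n,\ 0\le j\le n^2-n$; for $n\le k\le n^2-n-2$, the index pairs are $0\le i\le n,\ k-i+1\le j\le n^2-n$; for $n^2-n-1\le k\le n^2-1$, the index pairs are $k-n^2+n+1\le i\le n,\ k-i+1\le j\le n^2-n$. If $f\in T_k$ and $f'\in T_{k'}$ (with $k,k'$ not necessarily distinct) and $f\ne f'$, then their divisors of poles differ: $(f)_\infty\neq(f')_\infty$.
   Context: Let $n\ge 2$ be a prime power and $q=n^3$. The GK curve is the nonsingular curve over $\mathbb{F}_{q^2}$ with affine equations $Z^{n^2-n+1}=Y\,h(X)$, $X^n+X=Y^{n+1}$, where $h(X)=\sum_{i=0}^{n}(-1)^{i+1}X^{i(n-1)}$; its function field is $\mathbb{F}_{q^2}(x,y,z)$ with $z^{n^2-n+1}=y h(x)$, $x^n+x=y^{n+1}$. $P_\infty=(1:0:0:0)$ is its unique point at infinity and $P_0=(0,0,0)$. For a rational function $f$, $(f)_\infty$ denotes its divisor of poles. *)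

theory Defs
  imports "HOL-Computational_Algebra.Computational_Algebra"
begin

definition field_emb :: "('k::field \<Rightarrow> 'L::field) \<Rightarrow> bool" where
  "field_emb e \<longleftrightarrow> inj e \<and> e 0 = 0 \<and> e 1 = 1 \<and>
     (\<forall>a b. e (a + b) = e a + e b) \<and> (\<forall>a b. e (a * b) = e a * e b)"

definition is_subfield :: "('L::field) set \<Rightarrow> bool" where
  "is_subfield S \<longleftrightarrow> 0 \<in> S \<and> 1 \<in> S \<and>
     (\<forall>a\<in>S. \<forall>b\<in>S. a + b \<in> S \<and> a - b \<in> S \<and> a * b \<in> S) \<and>
     (\<forall>a\<in>S. inverse a \<in> S)"

definition gk_h :: "nat \<Rightarrow> 'L::field \<Rightarrow> 'L" where
  "gk_h n X = (\<Sum>i\<le>n. (-1) ^ (i + 1) * X ^ (i * (n - 1)))"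

text \<open>L is (a copy of) the GK function field F_{q^2}(x,y,z), q = n^3, over the
  constant field e('k): x is transcendental over the constants, L is generated
  by x,y,z over the constants, and the defining equations hold.\<close>
definition GK_function_field ::
  "nat \<Rightarrow> ('k::field \<Rightarrow> 'L::field) \<Rightarrow> 'L \<Rightarrow> 'L \<Rightarrow> 'L \<Rightarrow> bool" where
  "GK_function_field n e x y z \<longleftrightarrow>
     field_emb e \<and>
     (\<forall>p::'k poly. p \<noteq> 0 \<longrightarrow> poly (map_poly e p) x \<noteq> 0) \<and>
     (\<forall>S. is_subfield S \<and> range e \<subseteq> S \<and> x \<in> S \<and> y \<in> S \<and> z \<in> S \<longrightarrow> S = UNIV) \<and>
     z ^ (n^2 - n + 1) = y * gk_h n x \<and>
     x ^ n + x = y ^ (n + 1)"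

text \<open>Places of L/e('k), represented by their normalized discrete valuations
  (values on nonzero elements; trivial on nonzero constants; surjective onto Z,
  which follows from having an element of value 1).\<close>
definition is_place :: "('k::field \<Rightarrow> 'L::field) \<Rightarrow> ('L \<Rightarrow> int) \<Rightarrow> bool" where
  "is_place e v \<longleftrightarrow>
     (\<forall>a b. a \<noteq> 0 \<longrightarrow> b \<noteq> 0 \<longrightarrow> v (a * b) = v a + v b) \<and>
     (\<forall>a b. a \<noteq> 0 \<longrightarrow> b \<noteq> 0 \<longrightarrow> a + b \<noteq> 0 \<longrightarrow> min (v a) (v b) \<le> v (a + b)) \<and>
     (\<forall>c. c \<noteq> 0 \<longrightarrow> v (e c) = 0) \<and>
     (\<exists>t. t \<noteq> 0 \<and> v t = 1)"

definition pole_divisor :: "('k::field \<Rightarrow> 'L::field) \<Rightarrow> 'L \<Rightarrow> ('L \<Rightarrow> int) \<Rightarrow> nat" where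
  "pole_divisor e f = (\<lambda>v. if is_place e v then nat (- v f) else 0)"

definition T_idx :: "nat \<Rightarrow> nat \<Rightarrow> (nat \<times> nat) set" where
  "T_idx n k =
     (if 1 \<le> k \<and> k \<le> n - 1 then
        {(i, j). i \<le> k \<and> k + 1 \<le> i + j \<and> j \<le> n^2 - n} \<union>
        {(i, j). k + 1 \<le> i \<and> i \<le> n \<and> j \<le> n^2 - n}
      else if n \<le> k \<and> k + 2 \<le> n^2 - n then
        {(i, j). i \<le> n \<and> k + 1 \<le> i + j \<and> j \<le> n^2 - n}
      else if n^2 - n \<le> k + 1 \<and> k \<le> n^2 - 1 then
        {(i, j). k + n + 1 \<le> i + n^2 \<and> i \<le> n \<and> k + 1 \<le> i + j \<and> j \<le> n^2 - n}
      else {})"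

definition T_set :: "nat \<Rightarrow> 'L::field \<Rightarrow> 'L \<Rightarrow> 'L \<Rightarrow> nat \<Rightarrow> 'L set" where
  "T_set n x y z k = (\<lambda>(i, j). y ^ i * z ^ j / x ^ k) ` T_idx n k"

end

theory Submission imports Defs "Jordan_Normal_Form.Determinant" "Jordan_Normal_Form.Char_Poly"
  "HOL-Number_Theory.Residues"
begin

lemma power_radical_charp:
  fixes a:: "'a::field fps"
  assumes a0: "a$0 \<noteq> 0" and kn: "(of_nat (Suc k) :: 'a) \<noteq> 0"
    and r0: "(r (Suc k) (a$0)) ^ Suc k = a$0"
  shows "(fps_radical r (Suc k) a) ^ (Suc k) = a"
proof -
  let ?r = "fps_radical r (Suc k) a"
  from a0 r0 have r00: "r (Suc k) (a$0) \<noteq> 0" by auto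
  have "?r ^ Suc k $ z = a$z" for z
  proof (induct z rule: nat_less_induct)
    fix n
    assume H: "\<forall>m<n. ?r ^ Suc k $ m = a$m"
    show "?r ^ Suc k $ n = a $n"
    proof (cases n)
      case 0
      then show ?thesis
        using fps_radical_power_nth[of r "Suc k" a, OF r0] by simp
    next
      case (Suc n1)
      then have "n \<noteq> 0" by simp
      let ?Pnk = "natpermute n (k + 1)"
      let ?Pnkn = "{xs \<in> ?Pnk. n \<in> set xs}"
      let ?Pnknn = "{xs \<in> ?Pnk. n \<notin> set xs}"
      have eq: "?Pnkn \<union> ?Pnknn = ?Pnk" by blast
      have d: "?Pnkn \<inter> ?Pnknn = {}" by blast
      have f: "finite ?Pnkn" "finite ?Pnknn"
        using finite_Un[of ?Pnkn ?Pnknn, unfolded eq]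
        by (metis natpermute_finite)+
      let ?f = "\<lambda>v. \<Prod>j\<in>{0..k}. ?r $ v ! j"
      have "sum ?f ?Pnkn = sum (\<lambda>v. ?r $ n * r (Suc k) (a $ 0) ^ k) ?Pnkn"
      proof (rule sum.cong)
        fix v assume v: "v \<in> {xs \<in> natpermute n (k + 1). n \<in> set xs}"
        let ?ths = "(\<Prod>j\<in>{0..k}. fps_radical r (Suc k) a $ v ! j) =
          fps_radical r (Suc k) a $ n * r (Suc k) (a $ 0) ^ k"
        from v obtain i where i: "i \<in> {0..k}" "v = (replicate (k+1) 0) [i:= n]"
          unfolding natpermute_contain_maximal by auto
        have "(\<Prod>j\<in>{0..k}. fps_radical r (Suc k) a $ v ! j) =
              (\<Prod>j\<in>{0..k}. if j = i then fps_radical r (Suc k) a $ n else r (Suc k) (a$0))"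
            using i r0 by (auto simp del: replicate.simps intro: prod.cong)
        also have "\<dots> = (fps_radical r (Suc k) a $ n) * r (Suc k) (a$0) ^ k"
          using i r0 by (simp add: prod_gen_delta)
        finally show ?ths .
      qed rule
      then have "sum ?f ?Pnkn = of_nat (k+1) * ?r $ n * r (Suc k) (a $ 0) ^ k"
        by (simp add: natpermute_max_card[OF \<open>n \<noteq> 0\<close>, simplified])
      also have "\<dots> = a$n - sum ?f ?Pnknn"
        unfolding Suc using r00 a0 kn by (simp add: field_simps fps_radical_def del: of_nat_Suc)
      finally have fn: "sum ?f ?Pnkn = a$n - sum ?f ?Pnknn" .
      have "(?r ^ Suc k)$n = sum ?f ?Pnkn + sum ?f ?Pnknn"
        unfolding fps_power_nth_Suc sum.union_disjoint[OF f d, unfolded eq] ..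
      also have "\<dots> = a$n" unfolding fn by simp
      finally show ?thesis .
    qed
  qed
  then show ?thesis using r0 by (simp add: fps_eq_iff)
qed

lemma fps_root_exists:
  fixes a:: "'a::field fps"
  assumes "0 < k" "(of_nat k :: 'a) \<noteq> 0" "c ^ k = a $ 0" "c \<noteq> 0"
  shows "\<exists>b. b ^ k = a \<and> b $ 0 = c"
proof -
  obtain k' where k: "k = Suc k'" using assms(1) by (cases k) auto
  let ?r = "\<lambda>_ _. c"
  have a0: "a $ 0 \<noteq> 0" using assms by auto
  have "(fps_radical ?r (Suc k') a) ^ (Suc k') = a"
    by (rule power_radical_charp) (use a0 assms k in auto)
  moreover have "fps_radical ?r (Suc k') a $ 0 = c" by simp
  ultimately show ?thesis using k by blast
qed


definition mm :: "nat \<Rightarrow> nat" where "mm n = n^2 - n + 1"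
definition DD :: "nat \<Rightarrow> nat" where "DD n = (n+1) * mm n"

definition Bm :: "nat \<Rightarrow> 'F::comm_ring_1 \<Rightarrow> 'F \<Rightarrow> nat \<Rightarrow> 'F" where
  "Bm n y z l = y ^ (l div mm n) * z ^ (l mod mm n)"

definition aP :: "nat \<Rightarrow> 'k::comm_ring_1 poly" where "aP n = [:0,1:]^n + [:0,1:]"
definition hP :: "nat \<Rightarrow> 'k::comm_ring_1 poly" where
  "hP n = (\<Sum>i\<le>n. [:(-1)^(i+1):] * [:0,1:]^(i*(n-1)))"

definition Iex :: "nat \<Rightarrow> nat \<Rightarrow> nat \<Rightarrow> nat" where
  "Iex n l b = l div mm n + b div mm n + (l mod mm n + b mod mm n) div mm n"
definition Jex :: "nat \<Rightarrow> nat \<Rightarrow> nat \<Rightarrow> nat" where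
  "Jex n l b = l mod mm n + b mod mm n"

definition kap :: "nat \<Rightarrow> nat \<Rightarrow> nat \<Rightarrow> 'k::comm_ring_1 poly" where
  "kap n l b = aP n ^ (Iex n l b div (n+1)) * hP n ^ (Jex n l b div mm n)"
definition pii :: "nat \<Rightarrow> nat \<Rightarrow> nat \<Rightarrow> nat" where
  "pii n l b = (Iex n l b mod (n+1)) * mm n + Jex n l b mod mm n"

lemma mm_pos: "0 < mm n" by (simp add: mm_def)

lemma pii_lt: "pii n l b < DD n"
proof -
  have m: "0 < mm n" by (rule mm_pos)
  have "Iex n l b mod (n+1) \<le> n" by (simp add: less_Suc_eq_le[symmetric])
  hence "(Iex n l b mod (n+1)) * mm n \<le> n * mm n" by simp
  moreover have "Jex n l b mod mm n < mm n" using m by simp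
  ultimately have "(Iex n l b mod (n+1)) * mm n + Jex n l b mod mm n < n * mm n + mm n" by linarith
  thus ?thesis unfolding pii_def DD_def by (simp add: algebra_simps)
qed

lemma pii_div: "pii n l b div mm n = Iex n l b mod (n+1)"
  and pii_mod: "pii n l b mod mm n = Jex n l b mod mm n"
  using mm_pos[of n] unfolding pii_def by simp_all

lemma monomial_law:
  fixes y z A H :: "'F::comm_ring_1"
  assumes y: "y ^ (n+1) = A" and z: "z ^ mm n = y * H"
  shows "y ^ I * z ^ J = A ^ ((I + J div mm n) div (n+1)) * H ^ (J div mm n)
           * y ^ ((I + J div mm n) mod (n+1)) * z ^ (J mod mm n)"
proof -
  have zJ: "z ^ J = (y*H) ^ (J div mm n) * z ^ (J mod mm n)"
    by (metis div_mult_mod_eq power_add power_mult z mult.commute)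
  have yI: "y ^ (I + J div mm n) = A ^ ((I + J div mm n) div (n+1)) * y ^ ((I + J div mm n) mod (n+1))"
    by (metis div_mult_mod_eq power_add power_mult y mult.commute)
  have "y ^ I * z ^ J = y ^ (I + J div mm n) * H ^ (J div mm n) * z ^ (J mod mm n)"
    unfolding zJ by (simp add: power_mult_distrib power_add algebra_simps)
  also have "\<dots> = A ^ ((I + J div mm n) div (n+1)) * H ^ (J div mm n)
           * y ^ ((I + J div mm n) mod (n+1)) * z ^ (J mod mm n)"
    unfolding yI by (simp add: algebra_simps)
  finally show ?thesis .
qed

lemma Bm_mult:
  fixes y z :: "'F::comm_ring_1" and \<rho> :: "'k::comm_ring_1 poly \<Rightarrow> 'F"
  assumes hom: "comm_ring_hom \<rho>"
    and y: "y ^ (n+1) = \<rho> (aP n)" and z: "z ^ mm n = y * \<rho> (hP n)"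
  shows "Bm n y z l * Bm n y z b = \<rho> (kap n l b) * Bm n y z (pii n l b)"
proof -
  interpret comm_ring_hom \<rho> by fact
  have "Bm n y z l * Bm n y z b = y ^ (l div mm n + b div mm n) * z ^ (Jex n l b)"
    unfolding Bm_def Jex_def by (simp add: power_add algebra_simps)
  also have "\<dots> = \<rho> (aP n) ^ (Iex n l b div (n+1)) * \<rho> (hP n) ^ (Jex n l b div mm n)
           * y ^ (Iex n l b mod (n+1)) * z ^ (Jex n l b mod mm n)"
    unfolding monomial_law[OF y z] Iex_def Jex_def by simp
  also have "\<dots> = \<rho> (kap n l b) * Bm n y z (pii n l b)"
    unfolding kap_def Bm_def pii_div pii_mod by (simp add: hom_distribs algebra_simps)
  finally show ?thesis .
qed

definition Rv :: "nat \<Rightarrow> ('k::comm_ring_1 poly \<Rightarrow> 'F::comm_ring_1) \<Rightarrow> 'F \<Rightarrow> 'F \<Rightarrow> 'k poly vec \<Rightarrow> 'F" where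
  "Rv n \<rho> y z c = (\<Sum>l<DD n. \<rho> (c $ l) * Bm n y z l)"

definition Mc :: "nat \<Rightarrow> 'k::comm_ring_1 poly vec \<Rightarrow> 'k poly mat" where
  "Mc n c = mat (DD n) (DD n) (\<lambda>(a,b). \<Sum>l<DD n. if pii n l b = a then c $ l * kap n l b else 0)"

lemma Mc_carrier: "Mc n c \<in> carrier_mat (DD n) (DD n)" unfolding Mc_def by simp

lemma Rv_mult:
  fixes y z :: "'F::comm_ring_1" and \<rho> :: "'k::comm_ring_1 poly \<Rightarrow> 'F"
  assumes hom: "comm_ring_hom \<rho>"
    and y: "y ^ (n+1) = \<rho> (aP n)" and z: "z ^ mm n = y * \<rho> (hP n)"
    and u: "u \<in> carrier_vec (DD n)"
  shows "Rv n \<rho> y z c * Rv n \<rho> y z u = Rv n \<rho> y z (Mc n c *\<^sub>v u)"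
proof -
  interpret comm_ring_hom \<rho> by fact
  let ?D = "DD n"
  let ?B = "Bm n y z"
  have du: "dim_vec u = ?D" using u by simp
  have "Rv n \<rho> y z (Mc n c *\<^sub>v u) = (\<Sum>a<?D. \<rho> ((Mc n c *\<^sub>v u) $ a) * ?B a)"
    unfolding Rv_def ..
  also have "\<dots> = (\<Sum>a<?D. \<Sum>b<?D. \<Sum>l<?D. if pii n l b = a then \<rho> (c $ l) * \<rho> (kap n l b) * \<rho> (u $ b) * ?B a else 0)"
  proof (rule sum.cong[OF refl])
    fix a assume a: "a \<in> {..<?D}"
    have Ma: "(Mc n c *\<^sub>v u) $ a = (\<Sum>b<?D. (\<Sum>l<?D. if pii n l b = a then c $ l * kap n l b else 0) * u $ b)"
      using a du unfolding Mc_def by (simp add: scalar_prod_def lessThan_atLeast0)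
    show "\<rho> ((Mc n c *\<^sub>v u) $ a) * ?B a = (\<Sum>b<?D. \<Sum>l<?D. if pii n l b = a then \<rho> (c $ l) * \<rho> (kap n l b) * \<rho> (u $ b) * ?B a else 0)"
    proof -
      have "\<rho> ((Mc n c *\<^sub>v u) $ a) = (\<Sum>b<?D. (\<Sum>l<?D. \<rho> (if pii n l b = a then c $ l * kap n l b else 0)) * \<rho> (u $ b))"
        unfolding Ma hom_sum hom_mult ..
      also have "\<dots> = (\<Sum>b<?D. (\<Sum>l<?D. if pii n l b = a then \<rho> (c $ l) * \<rho> (kap n l b) * \<rho> (u $ b) else 0))"
        unfolding sum_distrib_right by (intro sum.cong refl) (simp add: hom_mult)
      finally have R: "\<rho> ((Mc n c *\<^sub>v u) $ a) = (\<Sum>b<?D. (\<Sum>l<?D. if pii n l b = a then \<rho> (c $ l) * \<rho> (kap n l b) * \<rho> (u $ b) else 0))" .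
      show ?thesis unfolding R sum_distrib_right by (intro sum.cong refl) simp
    qed
  qed
  also have "\<dots> = (\<Sum>b<?D. \<Sum>l<?D. \<Sum>a<?D. if pii n l b = a then \<rho> (c $ l) * \<rho> (kap n l b) * \<rho> (u $ b) * ?B a else 0)"
    by (rule trans[OF sum.swap]) (rule sum.cong[OF refl], rule sum.swap)
  also have "\<dots> = (\<Sum>b<?D. \<Sum>l<?D. \<rho> (c $ l) * \<rho> (kap n l b) * \<rho> (u $ b) * ?B (pii n l b))"
    by (intro sum.cong refl) (simp add: sum.delta pii_lt)
  also have "\<dots> = (\<Sum>b<?D. \<Sum>l<?D. (\<rho> (c $ l) * ?B l) * (\<rho> (u $ b) * ?B b))"
  proof (intro sum.cong refl)
    fix b l
    have "(\<rho> (c $ l) * ?B l) * (\<rho> (u $ b) * ?B b) = \<rho> (c $ l) * \<rho> (u $ b) * (?B l * ?B b)"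
      by (simp add: ac_simps)
    also have "\<dots> = \<rho> (c $ l) * \<rho> (u $ b) * (\<rho> (kap n l b) * ?B (pii n l b))"
      by (simp add: Bm_mult[OF hom y z])
    also have "\<dots> = \<rho> (c $ l) * \<rho> (kap n l b) * \<rho> (u $ b) * ?B (pii n l b)"
      by (simp add: ac_simps)
    finally show "\<rho> (c $ l) * \<rho> (kap n l b) * \<rho> (u $ b) * ?B (pii n l b) = (\<rho> (c $ l) * ?B l) * (\<rho> (u $ b) * ?B b)" by simp
  qed
  also have "\<dots> = Rv n \<rho> y z c * Rv n \<rho> y z u"
    unfolding Rv_def sum_product by (rule sum.swap)
  finally show ?thesis by simp
qed


lemma comm_ring_hom_eval:
  assumes "comm_ring_hom \<iota>"
  shows "comm_ring_hom (\<lambda>p. poly (map_poly \<iota> p) \<xi>)"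
proof -
  interpret map_poly_comm_ring_hom \<iota> using assms by (simp add: map_poly_comm_ring_hom_def)
  show ?thesis by unfold_locales (simp_all add: hom_distribs)
qed

lemma comm_ring_hom_fps_const: "comm_ring_hom (fps_const :: 'a::comm_ring_1 \<Rightarrow> 'a fps)"
  by unfold_locales (simp_all add: fps_const_add fps_const_mult)

lemma comm_ring_hom_fps_to_fls: "comm_ring_hom (fps_to_fls :: 'a::comm_ring_1 fps \<Rightarrow> 'a fls)"
  by unfold_locales (simp_all add: fls_times_fps_to_fls)

definition GF :: "nat \<Rightarrow> 'k::field poly \<Rightarrow> 'k fps" where
  "GF n p = poly (map_poly fps_const p) (fps_X ^ DD n)"

definition rhoF :: "nat \<Rightarrow> 'k::field poly \<Rightarrow> 'k fls" where
  "rhoF n p = fps_to_fls (GF n p)"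

lemma GF_hom: "comm_ring_hom (GF n :: 'k::field poly \<Rightarrow> 'k fps)"
  unfolding GF_def by (rule comm_ring_hom_eval[OF comm_ring_hom_fps_const])

lemma rhoF_hom: "comm_ring_hom (rhoF n :: 'k::field poly \<Rightarrow> 'k fls)"
proof -
  interpret a: comm_ring_hom "GF n :: 'k poly \<Rightarrow> 'k fps" by (rule GF_hom)
  interpret b: comm_ring_hom "fps_to_fls :: 'k fps \<Rightarrow> 'k fls" by (rule comm_ring_hom_fps_to_fls)
  show ?thesis unfolding rhoF_def by unfold_locales (simp_all add: a.hom_add a.hom_mult b.hom_add b.hom_mult)
qed

lemma GF_pCons: "GF n (pCons a p) = fps_const a + fps_X ^ DD n * GF n p"
  unfolding GF_def by (cases "a = 0 \<and> p = 0") (auto simp: map_poly_pCons)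

lemma DD_pos: "0 < DD n" by (simp add: DD_def mm_def)

lemma GF_nth0: "GF n p $ 0 = poly p 0"
proof (induct p)
  case 0 then show ?case by (simp add: GF_def)
next
  case (pCons a p) then show ?case
    unfolding GF_pCons using DD_pos by (simp add: DD_def mm_def)
qed

lemma GF_nz: "p \<noteq> 0 \<Longrightarrow> GF n p \<noteq> 0 \<and> DD n dvd subdegree (GF n p)"
proof (induct p)
  case 0 then show ?case by simp
next
  case (pCons a p)
  show ?case
  proof (cases "a = 0")
    case False
    have "GF n (pCons a p) $ 0 = a" using GF_nth0[of n "pCons a p"] by simp
    with False show ?thesis by auto
  next
    case True
    then have p: "p \<noteq> 0" using pCons by auto
    with pCons have ih: "GF n p \<noteq> 0" "DD n dvd subdegree (GF n p)" by auto
    have eq: "GF n (pCons a p) = fps_X ^ DD n * GF n p" using True by (simp add: GF_pCons)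
    have nz: "fps_X ^ DD n * GF n p \<noteq> (0::'a fps)" using ih by simp
    have "subdegree (fps_X ^ DD n * GF n p) = DD n + subdegree (GF n p)"
      using ih by (simp add: subdegree_mult)
    then show ?thesis using eq nz ih by simp
  qed
qed

lemma fls_sum_nonzero:
  fixes f :: "'i \<Rightarrow> 'a::field fls"
  assumes fin: "finite S"
    and dist: "\<And>l l'. l \<in> S \<Longrightarrow> l' \<in> S \<Longrightarrow> f l \<noteq> 0 \<Longrightarrow> f l' \<noteq> 0 \<Longrightarrow>
                 fls_subdegree (f l) = fls_subdegree (f l') \<Longrightarrow> l = l'"
    and l0: "kz \<in> S" "f kz \<noteq> 0"
  shows "sum f S \<noteq> 0"
proof -
  let ?T = "{l\<in>S. f l \<noteq> 0}"
  have finT: "finite ?T" using fin by simp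
  have neT: "?T \<noteq> {}" using l0 by auto
  define lm where "lm = arg_min_on (\<lambda>l. fls_subdegree (f l)) ?T"
  have lmT: "lm \<in> ?T" unfolding lm_def by (rule arg_min_if_finite(1)[OF finT neT])
  have lmin: "fls_subdegree (f lm) \<le> fls_subdegree (f l)" if "l \<in> ?T" for l
    unfolding lm_def by (rule arg_min_least[OF finT neT that])
  define d where "d = fls_subdegree (f lm)"
  have other: "fls_nth (f l) d = 0" if "l \<in> S" "l \<noteq> lm" for l
  proof (cases "f l = 0")
    case False
    then have "l \<in> ?T" using that by simp
    from lmin[OF this] have "d \<le> fls_subdegree (f l)" unfolding d_def .
    moreover have "d \<noteq> fls_subdegree (f l)"
      using dist[of lm l] lmT that False unfolding d_def by auto
    ultimately show ?thesis by simp
  qed simp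
  have "fls_nth (sum f S) d = (\<Sum>l\<in>S. fls_nth (f l) d)" by (rule fls_nth_sum)
  also have "\<dots> = fls_nth (f lm) d"
    using lmT other by (subst sum.remove[of _ lm]) (auto simp: fin intro!: sum.neutral)
  also have "\<dots> \<noteq> 0" unfolding d_def using lmT by simp
  finally show ?thesis by auto
qed

lemma poly_hP_0:
  assumes "2 \<le> n"
  shows "poly (hP n :: 'k::comm_ring_1 poly) 0 = -1"
proof -
  have "poly (hP n :: 'k poly) 0 = (\<Sum>i\<le>n. (-1)^(i+1) * (0::'k)^(i*(n-1)))"
    unfolding hP_def by (simp add: poly_sum)
  also have "\<dots> = (-1)^(0+1) * (0::'k)^(0*(n-1)) + (\<Sum>i<n. (-1)^(Suc i+1) * (0::'k)^(Suc i*(n-1)))"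
    by (rule sum.atMost_shift)
  also have "(\<Sum>i<n. (-1)^(Suc i+1) * (0::'k)^(Suc i*(n-1))) = 0"
    using assms by (intro sum.neutral) (simp add: power_0_left)
  finally show ?thesis by simp
qed

definition Uf :: "nat \<Rightarrow> 'k::field fps" where
  "Uf n = (SOME U. U ^ (n+1) = 1 + fps_X ^ (DD n * (n-1)) \<and> U $ 0 = 1)"

definition Vf :: "nat \<Rightarrow> 'k::field fps" where
  "Vf n = (SOME V. V ^ (mm n) = Uf n * GF n (hP n) \<and> V $ 0 = -1)"

definition Yf :: "nat \<Rightarrow> 'k::field fls" where
  "Yf n = fls_X ^ (mm n) * fps_to_fls (Uf n)"

definition Zf :: "nat \<Rightarrow> 'k::field fls" where
  "Zf n = fls_X * fps_to_fls (Vf n)"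

locale charok =
  fixes n :: nat and ty :: "'k::field itself"
  assumes n2: "2 \<le> n"
    and ch1: "(of_nat (n+1) :: 'k) \<noteq> 0"
    and ch2: "(of_nat (mm n) :: 'k) \<noteq> 0"
    and modd: "odd (mm n)"
begin

lemma Uf: "(Uf n :: 'k fps) ^ (n+1) = 1 + fps_X ^ (DD n * (n-1)) \<and> Uf n $ 0 = (1::'k)"
proof -
  have pos: "0 < DD n * (n-1)" using n2 DD_pos[of n] by simp
  have "\<exists>b::'k fps. b ^ (n+1) = 1 + fps_X ^ (DD n * (n-1)) \<and> b $ 0 = 1"
    by (rule fps_root_exists) (use ch1 pos in auto)
  then show ?thesis unfolding Uf_def by (rule someI_ex)
qed

lemma GFh0: "GF n (hP n) $ 0 = (-1::'k)"
  by (simp add: GF_nth0 poly_hP_0[OF n2])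

lemma Vf: "(Vf n :: 'k fps) ^ (mm n) = Uf n * GF n (hP n) \<and> Vf n $ 0 = (-1::'k)"
proof -
  have "\<exists>b::'k fps. b ^ (mm n) = Uf n * GF n (hP n) \<and> b $ 0 = -1"
    by (rule fps_root_exists) (use ch2 modd mm_pos[of n] Uf GFh0 in auto)
  then show ?thesis unfolding Vf_def by (rule someI_ex)
qed

lemma DD_split: "DD n = mm n * (n+1)"
  by (simp add: DD_def)

lemma Yf_eq: "(Yf n :: 'k fls) ^ (n+1) = rhoF n (aP n)"
proof -
  interpret G: comm_ring_hom "GF n :: 'k poly \<Rightarrow> 'k fps" by (rule GF_hom)
  have GX: "GF n [:0,1:] = (fps_X ^ DD n :: 'k fps)" unfolding GF_def by (simp add: map_poly_pCons)
  have "(Yf n :: 'k fls) ^ (n+1) = fls_X ^ (mm n * (n+1)) * fps_to_fls (Uf n ^ (n+1))"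
    unfolding Yf_def by (simp only: power_mult_distrib power_mult fps_to_fls_power)
  also have "\<dots> = fls_X ^ DD n * fps_to_fls (1 + fps_X ^ (DD n * (n-1)))"
    using Uf DD_split by simp
  also have "\<dots> = fps_to_fls (fps_X ^ DD n * (1 + fps_X ^ (DD n * (n-1))))"
    by (simp add: fls_times_fps_to_fls fps_to_fls_power)
  also have "fps_X ^ DD n * (1 + fps_X ^ (DD n * (n-1))) = (fps_X ^ DD n) ^ n + (fps_X ^ DD n :: 'k fps)"
  proof -
    have "DD n + DD n * (n-1) = DD n * n" using n2 by (cases n) (simp_all add: algebra_simps)
    then show ?thesis by (simp add: algebra_simps power_add[symmetric] power_mult[symmetric])
  qed
  also have "\<dots> = GF n (aP n)" unfolding aP_def by (simp add: G.hom_add G.hom_power GX)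
  finally show ?thesis unfolding rhoF_def .
qed

lemma Zf_eq: "(Zf n :: 'k fls) ^ (mm n) = Yf n * rhoF n (hP n)"
proof -
  have "(Zf n :: 'k fls) ^ (mm n) = fls_X ^ mm n * fps_to_fls (Vf n ^ mm n)"
    unfolding Zf_def by (simp add: power_mult_distrib fps_to_fls_power)
  also have "\<dots> = fls_X ^ mm n * (fps_to_fls (Uf n) * fps_to_fls (GF n (hP n)))"
    using Vf by (simp add: fls_times_fps_to_fls)
  finally show ?thesis unfolding Yf_def rhoF_def by (simp add: ac_simps)
qed

lemma Yf_nz: "(Yf n :: 'k fls) \<noteq> 0" and Yf_sub: "fls_subdegree (Yf n :: 'k fls) = int (mm n)"
proof -
  have u: "fps_to_fls (Uf n :: 'k fps) \<noteq> 0" "fls_subdegree (fps_to_fls (Uf n :: 'k fps)) = 0"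
    using Uf by (auto simp: fls_subdegree_fls_to_fps)
  then show "(Yf n :: 'k fls) \<noteq> 0" "fls_subdegree (Yf n :: 'k fls) = int (mm n)"
    unfolding Yf_def by (simp_all add: fls_subdegree_pow)
qed

lemma Zf_nz: "(Zf n :: 'k fls) \<noteq> 0" and Zf_sub: "fls_subdegree (Zf n :: 'k fls) = 1"
proof -
  have u: "fps_to_fls (Vf n :: 'k fps) \<noteq> 0" "fls_subdegree (fps_to_fls (Vf n :: 'k fps)) = 0"
    using Vf by (auto simp: fls_subdegree_fls_to_fps)
  then show "(Zf n :: 'k fls) \<noteq> 0" "fls_subdegree (Zf n :: 'k fls) = 1"
    unfolding Zf_def by simp_all
qed

lemma Bm_sub: "Bm n (Yf n) (Zf n :: 'k fls) l \<noteq> 0 \<and> fls_subdegree (Bm n (Yf n) (Zf n :: 'k fls) l) = int l"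
proof -
  have "int (mm n) * int (l div mm n) + int (l mod mm n) = int l"
    by (metis div_mult_mod_eq of_nat_add of_nat_mult mult.commute)
  then show ?thesis unfolding Bm_def using Yf_nz Zf_nz Yf_sub Zf_sub
    by (simp add: fls_subdegree_pow ac_simps)
qed

lemma RvF_inj:
  assumes c: "c \<in> carrier_vec (DD n)" and z: "Rv n (rhoF n) (Yf n) (Zf n :: 'k fls) c = 0"
  shows "c = 0\<^sub>v (DD n)"
proof (rule ccontr)
  assume "c \<noteq> 0\<^sub>v (DD n)"
  then obtain l0 where l0: "l0 < DD n" "c $ l0 \<noteq> 0" using c by (auto simp: vec_eq_iff)
  let ?f = "\<lambda>l. rhoF n (c $ l) * Bm n (Yf n) (Zf n :: 'k fls) l"
  have trm: "?f l \<noteq> 0 \<and> (\<exists>q. fls_subdegree (?f l) = int (DD n * q + l))" if "c $ l \<noteq> 0" for l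
  proof -
    from GF_nz[OF that, of n] obtain q where g: "GF n (c $ l) \<noteq> 0" "subdegree (GF n (c $ l)) = DD n * q"
      by (auto elim: dvdE)
    have r: "rhoF n (c $ l) \<noteq> 0" "fls_subdegree (rhoF n (c $ l)) = int (DD n * q)"
      unfolding rhoF_def using g by (simp_all add: fls_subdegree_fls_to_fps)
    show ?thesis using r Bm_sub[of l] by auto
  qed
  have "sum ?f {..<DD n} \<noteq> 0"
  proof (rule fls_sum_nonzero[where kz = l0])
    fix l l' assume ll: "l \<in> {..<DD n}" "l' \<in> {..<DD n}" "?f l \<noteq> 0" "?f l' \<noteq> 0"
      "fls_subdegree (?f l) = fls_subdegree (?f l')"
    have "c $ l \<noteq> 0" "c $ l' \<noteq> 0" using ll(3,4) by (auto simp: rhoF_def GF_def)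
    from trm[OF this(1)] trm[OF this(2)] ll(5) obtain q q' where
      "int (DD n * q + l) = int (DD n * q' + l')" by auto
    then have "DD n * q + l = DD n * q' + l'" by (simp only: of_nat_eq_iff)
    then have "(DD n * q + l) mod DD n = (DD n * q' + l') mod DD n" by simp
    then show "l = l'" using ll(1,2) by simp
  qed (use l0 trm in auto)
  with z show False unfolding Rv_def by simp
qed

end


lemma smult_one_mat_vec:
  assumes "v \<in> carrier_vec N"
  shows "(d \<cdot>\<^sub>m 1\<^sub>m N) *\<^sub>v v = d \<cdot>\<^sub>v (v :: 'a::comm_ring_1 vec)"
proof (intro eq_vecI)
  fix i assume "i < dim_vec (d \<cdot>\<^sub>v v)"
  then have i: "i < N" using assms by simp
  have "((d \<cdot>\<^sub>m 1\<^sub>m N) *\<^sub>v v) $ i = (\<Sum>ia = 0..<N. (if ia = i then d else 0) * v $ ia)"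
    using i assms by (simp add: scalar_prod_def) (intro sum.cong refl, simp)
  also have "\<dots> = (\<Sum>ia = 0..<N. if ia = i then d * v $ i else 0)"
    by (rule sum.cong) auto
  also have "\<dots> = d * v $ i" using i by simp
  finally show "((d \<cdot>\<^sub>m 1\<^sub>m N) *\<^sub>v v) $ i = (d \<cdot>\<^sub>v v) $ i" using i assms by simp
qed (use assms in simp)

context
  fixes \<rho> :: "'k::comm_ring_1 poly \<Rightarrow> 'F::comm_ring_1"
  assumes hom: "comm_ring_hom \<rho>"
begin

interpretation comm_ring_hom \<rho> by (rule hom)

lemma Rv_add: "c \<in> carrier_vec (DD n) \<Longrightarrow> u \<in> carrier_vec (DD n) \<Longrightarrow>
   Rv n \<rho> y z (c + u) = Rv n \<rho> y z c + Rv n \<rho> y z u"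
  unfolding Rv_def by (simp add: hom_add distrib_right sum.distrib)

lemma Rv_minus: "c \<in> carrier_vec (DD n) \<Longrightarrow> u \<in> carrier_vec (DD n) \<Longrightarrow>
   Rv n \<rho> y z (c - u) = Rv n \<rho> y z c - Rv n \<rho> y z u"
  unfolding Rv_def by (simp add: hom_minus left_diff_distrib sum_subtractf)

lemma Rv_smult: "c \<in> carrier_vec (DD n) \<Longrightarrow> Rv n \<rho> y z (p \<cdot>\<^sub>v c) = \<rho> p * Rv n \<rho> y z c"
  unfolding Rv_def by (simp add: hom_mult sum_distrib_left ac_simps)

lemma Rv_zero: "Rv n \<rho> y z (0\<^sub>v (DD n)) = 0"
  unfolding Rv_def by simp

lemma Rv_unit: "l < DD n \<Longrightarrow> Rv n \<rho> y z (unit_vec (DD n) l) = Bm n y z l"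
proof -
  assume l: "l < DD n"
  have "Rv n \<rho> y z (unit_vec (DD n) l) = (\<Sum>la<DD n. (if la = l then 1 else 0) * Bm n y z la)"
    unfolding Rv_def by (intro sum.cong refl) (simp add: unit_vec_def)
  also have "\<dots> = (\<Sum>la<DD n. if la = l then Bm n y z l else 0)"
    by (rule sum.cong) auto
  also have "\<dots> = Bm n y z l" using l by simp
  finally show ?thesis .
qed

end

lemma Bm_0: "Bm n y z 0 = 1" unfolding Bm_def by simp
lemma Bm_1: "2 \<le> n \<Longrightarrow> Bm n y z 1 = z" unfolding Bm_def mm_def
  by (simp add: power2_eq_square)
lemma Bm_m: "Bm n y z (mm n) = y" unfolding Bm_def using mm_pos[of n] by simp
lemma mm_lt_DD: "0 < n \<Longrightarrow> mm n < DD n" using mm_pos[of n] by (simp add: DD_def)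
lemma one_lt_DD: "2 \<le> n \<Longrightarrow> 1 < DD n" by (simp add: DD_def mm_def power2_eq_square)

definition winv :: "nat \<Rightarrow> 'k::comm_ring_1 poly vec \<Rightarrow> 'k poly vec" where
  "winv n c = adj_mat (Mc n c) *\<^sub>v unit_vec (DD n) 0"
definition dinv :: "nat \<Rightarrow> 'k::comm_ring_1 poly vec \<Rightarrow> 'k poly" where
  "dinv n c = det (Mc n c)"

lemma winv_carrier: "winv n c \<in> carrier_vec (DD n)"
  unfolding winv_def using adj_mat(1)[OF Mc_carrier[of n c]] by (intro mult_mat_vec_carrier) auto

lemma Mc_winv: "Mc n c *\<^sub>v winv n c = dinv n c \<cdot>\<^sub>v unit_vec (DD n) 0"
proof -
  have "Mc n c *\<^sub>v winv n c = (Mc n c * adj_mat (Mc n c)) *\<^sub>v unit_vec (DD n) 0"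
    unfolding winv_def using adj_mat(1)[OF Mc_carrier[of n c]] Mc_carrier[of n c] by simp
  also have "\<dots> = dinv n c \<cdot>\<^sub>v unit_vec (DD n) 0"
    unfolding adj_mat(2)[OF Mc_carrier] dinv_def by (rule smult_one_mat_vec) simp
  finally show ?thesis .
qed

lemma Rv_winv:
  fixes y z :: "'F::comm_ring_1" and \<rho> :: "'k::comm_ring_1 poly \<Rightarrow> 'F"
  assumes hom: "comm_ring_hom \<rho>"
    and y: "y ^ (n+1) = \<rho> (aP n)" and z: "z ^ mm n = y * \<rho> (hP n)"
  shows "Rv n \<rho> y z c * Rv n \<rho> y z (winv n c) = \<rho> (dinv n c)"
proof -
  have "Rv n \<rho> y z c * Rv n \<rho> y z (winv n c) = Rv n \<rho> y z (Mc n c *\<^sub>v winv n c)"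
    by (rule Rv_mult[OF hom y z winv_carrier])
  also have "\<dots> = \<rho> (dinv n c)"
    unfolding Mc_winv Rv_smult[OF hom unit_vec_carrier] Rv_unit[OF hom DD_pos] Bm_0 by simp
  finally show ?thesis .
qed

context charok begin

lemma dinv_nz:
  assumes c: "c \<in> carrier_vec (DD n)" "c \<noteq> 0\<^sub>v (DD n)"
  shows "dinv n c \<noteq> (0 :: 'k poly)"
proof
  assume "dinv n c = 0"
  then obtain v where v: "v \<in> carrier_vec (DD n)" "v \<noteq> 0\<^sub>v (DD n)" "Mc n c *\<^sub>v v = 0\<^sub>v (DD n)"
    unfolding dinv_def using det_0_iff_vec_prod_zero[OF Mc_carrier] by blast
  have "Rv n (rhoF n) (Yf n) (Zf n :: 'k fls) c * Rv n (rhoF n) (Yf n) (Zf n) v = 0"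
    using Rv_mult[OF rhoF_hom Yf_eq Zf_eq v(1), of c] v(3) Rv_zero[OF rhoF_hom] by simp
  then have "Rv n (rhoF n) (Yf n) (Zf n :: 'k fls) c = 0 \<or> Rv n (rhoF n) (Yf n) (Zf n :: 'k fls) v = 0"
    by simp
  then show False using RvF_inj c v by blast
qed

end


lemma comm_ring_hom_emb: "field_emb e \<Longrightarrow> comm_ring_hom e"
  unfolding field_emb_def by unfold_locales auto

locale gkL = charok n ty for n and ty :: "'k::field itself" +
  fixes e :: "'k \<Rightarrow> 'L::field" and x y z :: 'L
  assumes emb: "field_emb e"
    and transc: "\<And>p::'k poly. p \<noteq> 0 \<Longrightarrow> poly (map_poly e p) x \<noteq> 0"
    and gen: "\<And>S. is_subfield S \<Longrightarrow> range e \<subseteq> S \<Longrightarrow> x \<in> S \<Longrightarrow> y \<in> S \<Longrightarrow> z \<in> S \<Longrightarrow> S = UNIV"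
    and eqz: "z ^ (n^2 - n + 1) = y * gk_h n x"
    and eqy: "x ^ n + x = y ^ (n + 1)"
begin

definition rhoL :: "'k poly \<Rightarrow> 'L" where "rhoL p = poly (map_poly e p) x"

lemma rhoL_hom: "comm_ring_hom rhoL"
  unfolding rhoL_def by (rule comm_ring_hom_eval[OF comm_ring_hom_emb[OF emb]])

interpretation L: comm_ring_hom rhoL by (rule rhoL_hom)
interpretation E: comm_ring_hom e by (rule comm_ring_hom_emb[OF emb])
interpretation F: comm_ring_hom "rhoF n :: 'k poly \<Rightarrow> 'k fls" by (rule rhoF_hom)

lemma rhoL_nz: "p \<noteq> 0 \<Longrightarrow> rhoL p \<noteq> 0" unfolding rhoL_def by (rule transc)

lemma rhoL_X: "rhoL [:0,1:] = x" unfolding rhoL_def by (simp add: map_poly_pCons)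
lemma rhoL_const: "rhoL [:a:] = e a" unfolding rhoL_def by (cases "a = 0") (auto simp: map_poly_pCons)

lemma yL: "y ^ (n+1) = rhoL (aP n)"
  unfolding aP_def using eqy by (simp add: L.hom_add L.hom_power rhoL_X)

lemma zL: "z ^ mm n = y * rhoL (hP n)"
proof -
  have "rhoL (hP n) = gk_h n x"
    unfolding hP_def gk_h_def L.hom_sum
    by (intro sum.cong refl) (simp only: L.hom_mult L.hom_power rhoL_X rhoL_const E.hom_power E.hom_uminus E.hom_one)
  then show ?thesis using eqz unfolding mm_def by simp
qed

lemma rhoF_nz: "p \<noteq> 0 \<Longrightarrow> rhoF n p \<noteq> (0 :: 'k fls)"
  unfolding rhoF_def using GF_nz[of p n] by simp

abbreviation RL where "RL \<equiv> Rv n rhoL y z"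
abbreviation RF where "RF \<equiv> Rv n (rhoF n) (Yf n) (Zf n :: 'k fls)"

lemma RL_winv: "RL c * RL (winv n c) = rhoL (dinv n c)"
  by (rule Rv_winv[OF rhoL_hom yL zL])

lemma RL_nz: "c \<in> carrier_vec (DD n) \<Longrightarrow> c \<noteq> 0\<^sub>v (DD n) \<Longrightarrow> RL c \<noteq> 0"
  using RL_winv[of c] rhoL_nz[OF dinv_nz] by auto

lemma RF_nz: "c \<in> carrier_vec (DD n) \<Longrightarrow> c \<noteq> 0\<^sub>v (DD n) \<Longrightarrow> RF c \<noteq> 0"
  using RvF_inj by blast

definition SL :: "'L set" where
  "SL = {RL c / rhoL d | c d. c \<in> carrier_vec (DD n) \<and> d \<noteq> 0}"

lemma SL_UNIV: "SL = UNIV"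
proof (rule gen)
  have n0: "0 < n" using n2 by simp
  have memI: "RL c / rhoL d \<in> SL" if "c \<in> carrier_vec (DD n)" "d \<noteq> 0" for c d
    unfolding SL_def using that by blast
  have one: "1 = RL (unit_vec (DD n) 0) / rhoL 1"
    by (simp add: Rv_unit[OF rhoL_hom DD_pos] Bm_0)
  show "is_subfield SL"
    unfolding is_subfield_def
  proof (intro conjI ballI)
    show "0 \<in> SL" using memI[of "0\<^sub>v (DD n)" 1] by (simp add: Rv_zero[OF rhoL_hom])
    show "1 \<in> SL" using memI[of "unit_vec (DD n) 0" 1] one by simp
  next
    fix a b assume a: "a \<in> SL" and b: "b \<in> SL"
    from a obtain c d where cd: "c \<in> carrier_vec (DD n)" "d \<noteq> 0" "a = RL c / rhoL d" unfolding SL_def by blast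
    from b obtain c' d' where cd': "c' \<in> carrier_vec (DD n)" "d' \<noteq> 0" "b = RL c' / rhoL d'" unfolding SL_def by blast
    have nz: "rhoL d \<noteq> 0" "rhoL d' \<noteq> 0" using cd cd' rhoL_nz by auto
    have "a + b = RL (d' \<cdot>\<^sub>v c + d \<cdot>\<^sub>v c') / rhoL (d * d')"
      unfolding cd(3) cd'(3) using cd cd' nz by (simp add: Rv_add[OF rhoL_hom] Rv_smult[OF rhoL_hom] L.hom_mult field_simps)
    then show "a + b \<in> SL" using memI cd cd' by simp
    have "a - b = RL (d' \<cdot>\<^sub>v c - d \<cdot>\<^sub>v c') / rhoL (d * d')"
      unfolding cd(3) cd'(3) using cd cd' nz by (simp add: Rv_minus[OF rhoL_hom] Rv_smult[OF rhoL_hom] L.hom_mult field_simps)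
    then show "a - b \<in> SL" using memI cd cd' by simp
    have "a * b = RL (Mc n c *\<^sub>v c') / rhoL (d * d')"
      unfolding cd(3) cd'(3) using cd cd' nz by (simp add: Rv_mult[OF rhoL_hom yL zL, symmetric] L.hom_mult)
    then show "a * b \<in> SL" using memI cd cd' Mc_carrier[of n c] by simp
  next
    fix a assume a: "a \<in> SL"
    from a obtain c d where cd: "c \<in> carrier_vec (DD n)" "d \<noteq> 0" "a = RL c / rhoL d" unfolding SL_def by blast
    show "inverse a \<in> SL"
    proof (cases "c = 0\<^sub>v (DD n)")
      case True
      then have "a = 0" using cd by (simp add: Rv_zero[OF rhoL_hom])
      then show ?thesis using memI[of "0\<^sub>v (DD n)" 1] by (simp add: Rv_zero[OF rhoL_hom])
    next
      case False
      have dn: "dinv n c \<noteq> 0" by (rule dinv_nz[OF cd(1) False])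
      have rc: "RL c \<noteq> 0" using RL_nz[OF cd(1) False] .
      have nz: "rhoL d \<noteq> 0" "rhoL (dinv n c) \<noteq> 0" using cd dn rhoL_nz by auto
      have "inverse a = RL (d \<cdot>\<^sub>v winv n c) / rhoL (dinv n c)"
        unfolding cd(3) using cd nz rc RL_winv[of c] by (simp add: Rv_smult[OF rhoL_hom winv_carrier] field_simps)
      then show ?thesis using memI[OF _ dn, of "d \<cdot>\<^sub>v winv n c"] winv_carrier[of n c] by simp
    qed
  qed
  show "range e \<subseteq> SL"
  proof
    fix b assume "b \<in> range e"
    then obtain a where b: "b = e a" by auto
    have "b = RL ([:a:] \<cdot>\<^sub>v unit_vec (DD n) 0) / rhoL 1"
      using b by (simp add: Rv_smult[OF rhoL_hom] Rv_unit[OF rhoL_hom DD_pos] Bm_0 rhoL_const)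
    then show "b \<in> SL" using memI[of "[:a:] \<cdot>\<^sub>v unit_vec (DD n) 0" 1] by simp
  qed
  have "x = RL ([:0,1:] \<cdot>\<^sub>v unit_vec (DD n) 0) / rhoL 1"
    by (simp add: Rv_smult[OF rhoL_hom] Rv_unit[OF rhoL_hom DD_pos] Bm_0 rhoL_X)
  then show "x \<in> SL" using memI[of "[:0,1:] \<cdot>\<^sub>v unit_vec (DD n) 0" 1] by simp
  have "y = RL (unit_vec (DD n) (mm n)) / rhoL 1"
    by (simp add: Rv_unit[OF rhoL_hom mm_lt_DD[OF n0]] Bm_m)
  then show "y \<in> SL" using memI[of "unit_vec (DD n) (mm n)" 1] by simp
  have "z = RL (unit_vec (DD n) 1) / rhoL 1"
    using Rv_unit[OF rhoL_hom one_lt_DD[OF n2], of y z] Bm_1[OF n2, of y z] by simp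
  then show "z \<in> SL" using memI[of "unit_vec (DD n) 1" 1] by simp
qed

end


context gkL begin

interpretation L: comm_ring_hom rhoL by (rule rhoL_hom)
interpretation F: comm_ring_hom "rhoF n :: 'k poly \<Rightarrow> 'k fls" by (rule rhoF_hom)

lemma rep: "\<exists>c d. c \<in> carrier_vec (DD n) \<and> d \<noteq> 0 \<and> a = RL c / rhoL d"
  using SL_UNIV unfolding SL_def by blast

definition phi :: "'L \<Rightarrow> 'k fls" where
  "phi a = (let cd = SOME cd. fst cd \<in> carrier_vec (DD n) \<and> snd cd \<noteq> 0 \<and> a = RL (fst cd) / rhoL (snd cd)
            in RF (fst cd) / rhoF n (snd cd))"

lemma RL_eq_imp:
  assumes c: "c \<in> carrier_vec (DD n)" and c': "c' \<in> carrier_vec (DD n)"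
    and e: "RL c = RL c'"
  shows "RF c = RF c'"
proof -
  have "RL (c - c') = 0" using e Rv_minus[OF rhoL_hom c c'] by simp
  then have "c - c' = 0\<^sub>v (DD n)" using RL_nz[of "c - c'"] c c' by auto
  then have "RF (c - c') = 0" by (simp add: Rv_zero[OF rhoF_hom])
  then show ?thesis using Rv_minus[OF rhoF_hom c c'] by simp
qed

lemma phi_rep:
  assumes c: "c \<in> carrier_vec (DD n)" and d: "d \<noteq> 0"
  shows "phi (RL c / rhoL d) = RF c / rhoF n d"
proof -
  let ?P = "\<lambda>cd. fst cd \<in> carrier_vec (DD n) \<and> snd cd \<noteq> 0 \<and> RL c / rhoL d = RL (fst cd) / rhoL (snd cd)"
  have ex: "\<exists>cd. ?P cd" using c d by (intro exI[of _ "(c,d)"]) simp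
  define cd where "cd = (SOME cd. ?P cd)"
  have P: "?P cd" unfolding cd_def using someI_ex[OF ex] .
  obtain c' d' where cd': "cd = (c', d')" by (cases cd)
  have c': "c' \<in> carrier_vec (DD n)" "d' \<noteq> 0" "RL c / rhoL d = RL c' / rhoL d'" using P cd' by auto
  have nz: "rhoL d \<noteq> 0" "rhoL d' \<noteq> 0" using d c' rhoL_nz by auto
  have nzF: "rhoF n d \<noteq> (0::'k fls)" "rhoF n d' \<noteq> (0::'k fls)" using d c' rhoF_nz by auto
  have "RL (d' \<cdot>\<^sub>v c) = RL (d \<cdot>\<^sub>v c')"
    using c'(3) nz by (simp add: Rv_smult[OF rhoL_hom c] Rv_smult[OF rhoL_hom c'(1)] field_simps)
  then have "RF (d' \<cdot>\<^sub>v c) = RF (d \<cdot>\<^sub>v c')"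
    by (rule RL_eq_imp[rotated 2]) (use c c' in auto)
  then have "rhoF n d' * RF c = rhoF n d * RF c'"
    by (simp add: Rv_smult[OF rhoF_hom c] Rv_smult[OF rhoF_hom c'(1)])
  then have "RF c / rhoF n d = RF c' / rhoF n d'" using nzF by (simp add: field_simps)
  then show ?thesis unfolding phi_def cd_def[symmetric] cd' by simp
qed

lemma phi_add: "phi (a + b) = phi a + phi b"
proof -
  obtain c d where cd: "c \<in> carrier_vec (DD n)" "d \<noteq> 0" "a = RL c / rhoL d" using rep by blast
  obtain c' d' where cd': "c' \<in> carrier_vec (DD n)" "d' \<noteq> 0" "b = RL c' / rhoL d'" using rep by blast
  have nz: "rhoL d \<noteq> 0" "rhoL d' \<noteq> 0" using cd cd' rhoL_nz by auto
  have nzF: "rhoF n d \<noteq> (0::'k fls)" "rhoF n d' \<noteq> (0::'k fls)" using cd cd' rhoF_nz by auto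
  have ab: "a + b = RL (d' \<cdot>\<^sub>v c + d \<cdot>\<^sub>v c') / rhoL (d * d')"
    unfolding cd(3) cd'(3) using cd cd' nz by (simp add: Rv_add[OF rhoL_hom] Rv_smult[OF rhoL_hom] L.hom_mult field_simps)
  have "phi (a + b) = RF (d' \<cdot>\<^sub>v c + d \<cdot>\<^sub>v c') / rhoF n (d * d')"
    unfolding ab using cd cd' by (intro phi_rep) auto
  also have "\<dots> = RF c / rhoF n d + RF c' / rhoF n d'"
    using cd cd' nzF by (simp add: Rv_add[OF rhoF_hom] Rv_smult[OF rhoF_hom] F.hom_mult field_simps)
  finally show ?thesis unfolding cd(3) cd'(3) using phi_rep cd cd' by simp
qed

lemma phi_mult: "phi (a * b) = phi a * phi b"
proof -
  obtain c d where cd: "c \<in> carrier_vec (DD n)" "d \<noteq> 0" "a = RL c / rhoL d" using rep by blast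
  obtain c' d' where cd': "c' \<in> carrier_vec (DD n)" "d' \<noteq> 0" "b = RL c' / rhoL d'" using rep by blast
  have ab: "a * b = RL (Mc n c *\<^sub>v c') / rhoL (d * d')"
    unfolding cd(3) cd'(3) by (simp add: Rv_mult[OF rhoL_hom yL zL cd'(1), symmetric] L.hom_mult)
  have "phi (a * b) = RF (Mc n c *\<^sub>v c') / rhoF n (d * d')"
    unfolding ab using cd cd' Mc_carrier[of n c] by (intro phi_rep) auto
  also have "\<dots> = (RF c / rhoF n d) * (RF c' / rhoF n d')"
    by (simp add: Rv_mult[OF rhoF_hom Yf_eq Zf_eq cd'(1), symmetric] F.hom_mult)
  finally show ?thesis unfolding cd(3) cd'(3) using phi_rep cd cd' by simp
qed

lemma phi_nz: "a \<noteq> 0 \<Longrightarrow> phi a \<noteq> 0"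
proof -
  assume a: "a \<noteq> 0"
  obtain c d where cd: "c \<in> carrier_vec (DD n)" "d \<noteq> 0" "a = RL c / rhoL d" using rep by blast
  have "c \<noteq> 0\<^sub>v (DD n)" using a cd by (auto simp: Rv_zero[OF rhoL_hom])
  then have "RF c \<noteq> 0" using RF_nz cd by auto
  then show ?thesis unfolding cd(3) using phi_rep[OF cd(1,2)] rhoF_nz[OF cd(2)] by simp
qed

lemma phi_simple: "c \<in> carrier_vec (DD n) \<Longrightarrow> phi (RL c) = RF c"
  using phi_rep[of c 1] by simp

lemma phi_x: "phi x = fls_X ^ DD n"
proof -
  have eq: "x = RL ([:0,1:] \<cdot>\<^sub>v unit_vec (DD n) 0)"
    by (simp add: Rv_smult[OF rhoL_hom] Rv_unit[OF rhoL_hom DD_pos] Bm_0 rhoL_X)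
  have "phi x = RF ([:0,1:] \<cdot>\<^sub>v unit_vec (DD n) 0)" by (subst eq) (rule phi_simple, simp)
  also have "\<dots> = rhoF n [:0,1:]"
    by (simp add: Rv_smult[OF rhoF_hom] Rv_unit[OF rhoF_hom DD_pos] Bm_0)
  also have "\<dots> = fls_X ^ DD n" unfolding rhoF_def GF_def by (simp add: map_poly_pCons fps_to_fls_power)
  finally show ?thesis .
qed

lemma phi_y: "phi y = Yf n"
proof -
  have n0: "0 < n" using n2 by simp
  have eq: "y = RL (unit_vec (DD n) (mm n))"
    by (simp add: Rv_unit[OF rhoL_hom mm_lt_DD[OF n0]] Bm_m)
  have "phi y = RF (unit_vec (DD n) (mm n))" by (subst eq) (rule phi_simple, simp)
  also have "\<dots> = Yf n" by (simp add: Rv_unit[OF rhoF_hom mm_lt_DD[OF n0]] Bm_m)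
  finally show ?thesis .
qed

lemma phi_z: "phi z = Zf n"
proof -
  have eq: "z = RL (unit_vec (DD n) 1)"
    using Rv_unit[OF rhoL_hom one_lt_DD[OF n2], of y z] Bm_1[OF n2, of y z] by simp
  have "phi z = RF (unit_vec (DD n) 1)" by (subst eq) (rule phi_simple, simp)
  also have "\<dots> = Zf n"
    using Rv_unit[OF rhoF_hom[of n] one_lt_DD[OF n2], where y="Yf n :: 'k fls" and z="Zf n :: 'k fls"] Bm_1[OF n2, of "Yf n :: 'k fls" "Zf n :: 'k fls"] by simp
  finally show ?thesis .
qed

lemma phi_e: "phi (e a) = fls_const a"
proof -
  have eq: "e a = RL ([:a:] \<cdot>\<^sub>v unit_vec (DD n) 0)"
    by (simp add: Rv_smult[OF rhoL_hom] Rv_unit[OF rhoL_hom DD_pos] Bm_0 rhoL_const)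
  have "phi (e a) = RF ([:a:] \<cdot>\<^sub>v unit_vec (DD n) 0)" by (subst eq) (rule phi_simple, simp)
  also have "\<dots> = rhoF n [:a:]"
    by (simp add: Rv_smult[OF rhoF_hom] Rv_unit[OF rhoF_hom DD_pos] Bm_0)
  also have "\<dots> = fls_const a" unfolding rhoF_def GF_def
    by (cases "a = 0") (auto simp: map_poly_pCons)
  finally show ?thesis .
qed

definition val :: "'L \<Rightarrow> int" where "val a = fls_subdegree (phi a)"

lemma val_place: "is_place e val"
  unfolding is_place_def
proof (intro conjI allI impI)
  fix a b :: 'L assume a: "a \<noteq> 0" and b: "b \<noteq> 0"
  show "val (a * b) = val a + val b" unfolding val_def phi_mult using phi_nz[OF a] phi_nz[OF b] by simp
  assume ab: "a + b \<noteq> 0"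
  show "min (val a) (val b) \<le> val (a + b)" unfolding val_def phi_add
    using fls_plus_subdegree[of "phi a" "phi b"] phi_nz[OF ab] phi_add by simp
next
  fix c :: 'k assume "c \<noteq> 0"
  show "val (e c) = 0" unfolding val_def phi_e by simp
next
  show "\<exists>t. t \<noteq> 0 \<and> val t = 1"
  proof (intro exI conjI)
    show "val z = 1" unfolding val_def phi_z using Zf_sub .
    have p0: "phi 0 = 0" using phi_add[of 0 0] by (metis add.right_neutral add_left_cancel)
    show "z \<noteq> 0" using phi_z Zf_nz p0 by auto
  qed
qed

lemma val_x: "val x = int (DD n)" unfolding val_def phi_x by simp
lemma val_y: "val y = int (mm n)" unfolding val_def phi_y using Yf_sub .
lemma val_z: "val z = 1" unfolding val_def phi_z using Zf_sub .

end


lemma arith_uniq: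
  fixes i j k i' j' k' n m :: nat
  assumes m: "0 < m" and i: "i \<le> n" "i' \<le> n" and j: "j < m" "j' < m" and k: "1 \<le> k" "1 \<le> k'"
    and eq: "nat (int k * int ((n+1)*m) - int i * int m - int j) = nat (int k' * int ((n+1)*m) - int i' * int m - int j')"
  shows "i = i' \<and> j = j' \<and> k = k'"
proof -
  have pos: "int k * int ((n+1)*m) - int i * int m - int j > 0" if "i \<le> n" "j < m" "1 \<le> k" for i j k
  proof -
    define X where "X = int n * int m + int m"
    have A: "X \<le> int k * X"
      using mult_right_mono[of 1 "int k" X] that unfolding X_def by simp
    have B: "int i * int m \<le> int n * int m" using that by (simp add: mult_right_mono)
    have C: "int j < int m" using that by simp
    have D: "int ((n+1)*m) = int n * int m + int m" by (simp add: algebra_simps)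
    show ?thesis unfolding D X_def[symmetric] using A B C unfolding X_def by linarith
  qed
  have E: "int k * int ((n+1)*m) - int i * int m - int j = int k' * int ((n+1)*m) - int i' * int m - int j'"
    using eq pos[OF i(1) j(1) k(1)] pos[OF i(2) j(2) k(2)] by simp
  define t where "t = (int k - int k') * (int n + 1) - (int i - int i')"
  have jt: "int j - int j' = int m * t" using E unfolding t_def by (simp add: algebra_simps)
  have "t = 0"
  proof (rule ccontr)
    assume "t \<noteq> 0"
    then have "\<bar>t\<bar> \<ge> 1" by simp
    then have "\<bar>int m * t\<bar> \<ge> int m" using m by (simp add: abs_mult)
    moreover have "\<bar>int j - int j'\<bar> < int m" using j by simp
    ultimately show False using jt by simp
  qed
  then have jj: "j = j'" using jt by simp
  have ki: "(int k - int k') * (int n + 1) = int i - int i'" using \<open>t = 0\<close> unfolding t_def by simp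
  have "k = k'"
  proof (rule ccontr)
    assume "k \<noteq> k'"
    then have "\<bar>int k - int k'\<bar> \<ge> 1" by simp
    then have "\<bar>(int k - int k') * (int n + 1)\<bar> \<ge> int n + 1" by (simp add: abs_mult)
    moreover have "\<bar>int i - int i'\<bar> \<le> int n" using i by simp
    ultimately show False using ki by simp
  qed
  then show ?thesis using ki jj by simp
qed

lemma T_idx_bounds: "(i, j) \<in> T_idx n k \<Longrightarrow> i \<le> n \<and> j \<le> n^2 - n"
  unfolding T_idx_def by (auto split: if_splits)

context gkL begin

lemma phi_one: "phi 1 = 1" using phi_e[of 1] emb unfolding field_emb_def by simp

lemma phi_pow: "phi (a ^ k) = phi a ^ k"
  by (induct k) (simp_all add: phi_mult phi_one)

lemma phi_zero: "phi 0 = 0" using phi_add[of 0 0] by (metis add.right_neutral add_left_cancel)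

lemma xyz_nz: "x \<noteq> 0" "y \<noteq> 0" "z \<noteq> 0"
  using phi_x phi_y phi_z Yf_nz Zf_nz phi_zero by auto

lemma val_f: "val (y ^ i * z ^ j / x ^ k) = int i * int (mm n) + int j - int k * int (DD n)"
proof -
  let ?f = "y ^ i * z ^ j / x ^ k"
  have fx: "?f * x ^ k = y ^ i * z ^ j" using xyz_nz by simp
  have fnz: "?f \<noteq> 0" using xyz_nz by simp
  have "phi ?f * phi (x ^ k) = phi (y ^ i) * phi (z ^ j)" by (metis fx phi_mult)
  then have "phi ?f * (fls_X ^ DD n) ^ k = Yf n ^ i * Zf n ^ j"
    by (simp only: phi_pow phi_x phi_y phi_z)
  then have "fls_subdegree (phi ?f * (fls_X ^ DD n) ^ k) = fls_subdegree (Yf n ^ i * (Zf n :: 'k fls) ^ j)" by simp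
  then have "val ?f + int k * int (DD n) = int i * int (mm n) + int j"
    unfolding val_def using phi_nz[OF fnz] Yf_nz Zf_nz Yf_sub Zf_sub
    by (simp add: fls_subdegree_pow)
  then show ?thesis by simp
qed

end


lemma char_zero_n:
  assumes p: "prime (p::nat)" and t: "1 \<le> t" and n: "n = p ^ t"
    and card: "card (UNIV :: 'k::{field,finite} set) = (n ^ 3) ^ 2"
  shows "(of_nat n :: 'k) = 0"
proof -
  have cd: "CHAR('k) dvd (n^3)^2" using CHAR_dvd_CARD[where 'a='k] card by simp
  have np: "0 < n" using n p by (simp add: prime_gt_0_nat)
  have cpos: "0 < CHAR('k)"
  proof (rule ccontr)
    assume "\<not> 0 < CHAR('k)"
    then have "CHAR('k) = 0" by simp
    with cd have "(n^3)^2 = 0" by simp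
    with np show False by simp
  qed
  have cp: "prime CHAR('k)" by (rule prime_CHAR_semidom[OF cpos])
  have "(n^3)^2 = p ^ (t*3*2)" unfolding n by (simp only: power_mult[symmetric] mult.commute)
  with cd have "CHAR('k) dvd p ^ (t*3*2)" by simp
  then have "CHAR('k) dvd p" using cp prime_dvd_power by blast
  then have "CHAR('k) = p" using cp p by (simp add: primes_dvd_imp_eq)
  then have "(of_nat p :: 'k) = 0" by (metis of_nat_CHAR)
  then show ?thesis unfolding n using t by (simp add: of_nat_power)
qed

theorem mainTheorem2:
  fixes n :: nat and e :: "'k::{field,finite} \<Rightarrow> 'L::field" and x y z :: 'L
  assumes "\<exists>p m. prime p \<and> 1 \<le> m \<and> n = p ^ m"
    and "3 \<le> n"
    and "card (UNIV :: 'k set) = (n ^ 3) ^ 2"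
    and "GK_function_field n e x y z"
    and "1 \<le> k" and "k \<le> n^2 - 1" and "1 \<le> k'" and "k' \<le> n^2 - 1"
    and "f \<in> T_set n x y z k" and "f' \<in> T_set n x y z k'"
    and "f \<noteq> f'"
  shows "pole_divisor e f \<noteq> pole_divisor e f'"
proof
  assume peq: "pole_divisor e f = pole_divisor e f'"
  from assms(1) obtain p t where pt: "prime p" "1 \<le> t" "n = p ^ t" by blast
  have n0: "(of_nat n :: 'k) = 0" by (rule char_zero_n[OF pt assms(3)])
  have mmn: "mm n = n * (n - 1) + 1"
    unfolding mm_def by (simp add: power2_eq_square algebra_simps)
  have ch1: "(of_nat (n+1) :: 'k) \<noteq> 0" using n0 by simp
  have ch2: "(of_nat (mm n) :: 'k) \<noteq> 0" unfolding mmn using n0 by simp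
  have modd: "odd (mm n)" unfolding mmn by (cases "even n") auto
  have n2: "2 \<le> n" using assms(2) by simp
  interpret charok n "TYPE('k)" by unfold_locales (use n2 ch1 ch2 modd in auto)
  have GK: "GK_function_field n e x y z" by fact
  interpret gkL n "TYPE('k)" e x y z
    by unfold_locales (use GK in \<open>auto simp: GK_function_field_def\<close>)
  from assms(9) obtain i j where f: "(i, j) \<in> T_idx n k" "f = y ^ i * z ^ j / x ^ k"
    unfolding T_set_def by auto
  from assms(10) obtain i' j' where f': "(i', j') \<in> T_idx n k'" "f' = y ^ i' * z ^ j' / x ^ k'"
    unfolding T_set_def by auto
  have b: "i \<le> n" "j \<le> n^2 - n" using T_idx_bounds[OF f(1)] by auto
  have b': "i' \<le> n" "j' \<le> n^2 - n" using T_idx_bounds[OF f'(1)] by auto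
  have jm: "j < mm n" "j' < mm n" using b b' unfolding mm_def by auto
  have "pole_divisor e f val = pole_divisor e f' val" using peq by simp
  then have "nat (- val f) = nat (- val f')" unfolding pole_divisor_def using val_place by simp
  then have "nat (int k * int ((n+1) * mm n) - int i * int (mm n) - int j)
           = nat (int k' * int ((n+1) * mm n) - int i' * int (mm n) - int j')"
    unfolding f(2) f'(2) val_f DD_def by (simp add: algebra_simps)
  then have "i = i' \<and> j = j' \<and> k = k'"
    by (rule arith_uniq[OF mm_pos b(1) b'(1) jm assms(5) assms(7), rotated -1])
  then have "f = f'" using f f' by simp
  with assms(11) show False by simp
qed


end
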